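(* Let $\mathcal{C}$ be a BMZ-collection, $\mathcal{R}\in\mathbf{R}$, and $a\in C\setminus\{z\}$. Then there is exactly one $\mathcal{R}'\in\mathbf{R}$ with $\mathcal{R}'\neq\mathcal{R}$ and $\Phi(\mathcal{R}-z-a)\subseteq\Phi(\mathcal{R}'-z)$ (i.e., having $\operatorname{conv}(\Phi(\mathcal{R}-z-a))$ as a face), and it satisfies $\operatorname{csgn}(\mathcal{R}')=-\operatorname{csgn}(\mathcal{R})$.
   Context: Standing notation: $N=(d+1)(r-1)$; $w_1,\ldots,w_r\in\mathbb{R}^{r-1}$ the vertices of a regular $(r-1)$-simplex centered at $0$; $\varphi_i(x)=(x,1)\otimes w_i\in\mathbb{R}^N$; for an $r$-tuple $\mathcal{P}=(P_1,\ldots,P_r)$ of pairwise disjoint finite sets, $\Phi(\mathcal{P})=\bigcup_i\{\varphi_i(p):p\in P_i\}$. A BMZ-collection is $\mathcal{C}=(C_1,\ldots,C_{d+2})$, pairwise disjoint finite subsets of $\mathbb{R}^d$, $|C_1|=\cdots=|C_{d+1}|=r-1$, $C_{d+2}=\{z\}$; ground set $C=\{c_1,\ldots,c_{N+1}\}$, $c_{N+1}=z$, $C_k=\{c_{(k-1)(r-1)+1},\ldots,c_{k(r-1)}\}$ for $k\le d+1$. Rainbow $r$-partition: $r$-tuple $(R_1,\ldots,R_r)$ of pairwise disjoint subsets of $C$ with $|R_i\cap C_j|\le1$; maximal if it covers $C$. $\mathbf{R}$: maximal rainbow $r$-partitions with $z\in R_r$. $\mathcal{R}-a$: remove $a$ from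 its class. For $\mathcal{R}\in\mathbf{R}$ and $k\in[d+1]$, $\pi_k$ is the permutation of $[r]$ with $\pi_k(j)=i$ where $c_{(k-1)(r-1)+j}\in R_i$ ($j\in[r-1]$) and $\pi_k(r)$ the unique remaining index; $\operatorname{csgn}(\mathcal{R})=\prod_{k=1}^{d+1}\operatorname{sgn}\pi_k$. *)

theory Defs
  imports "HOL-Analysis.Analysis" "HOL-Combinatorics.Permutations"
begin

text \<open>Points of R^d are vectors of type real^'d (d = CARD('d)).
  The ground set C is given by an indexing c : nat => point, c_1,...,c_(N+1),
  with N = (d+1)(r-1) and z = c_(N+1).\<close>

definition bmzN :: "nat \<Rightarrow> nat \<Rightarrow> nat" where
  "bmzN d r = (d + 1) * (r - 1)"

definition bmz_z :: "nat \<Rightarrow> nat \<Rightarrow> (nat \<Rightarrow> 'a) \<Rightarrow> 'a" where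
  "bmz_z d r c = c (bmzN d r + 1)"

definition bmz_ground :: "nat \<Rightarrow> nat \<Rightarrow> (nat \<Rightarrow> 'a) \<Rightarrow> 'a set" where
  "bmz_ground d r c = c ` {1 .. bmzN d r + 1}"

definition bmz_block :: "nat \<Rightarrow> nat \<Rightarrow> (nat \<Rightarrow> 'a) \<Rightarrow> nat \<Rightarrow> 'a set" where
  "bmz_block d r c k =
     (if k = d + 2 then {bmz_z d r c} else c ` {(k - 1) * (r - 1) + 1 .. k * (r - 1)})"

text \<open>An r-tuple (R_1,...,R_r) is represented as a function nat => set, with R i = {}
  for i outside {1..r}.\<close>
definition rainbow_partition :: "nat \<Rightarrow> nat \<Rightarrow> (nat \<Rightarrow> 'a) \<Rightarrow> (nat \<Rightarrow> 'a set) \<Rightarrow> bool" where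
  "rainbow_partition d r c R \<longleftrightarrow>
     (\<forall>i. i \<notin> {1..r} \<longrightarrow> R i = {}) \<and>
     (\<forall>i\<in>{1..r}. R i \<subseteq> bmz_ground d r c) \<and>
     (\<forall>i\<in>{1..r}. \<forall>j\<in>{1..r}. i \<noteq> j \<longrightarrow> R i \<inter> R j = {}) \<and>
     (\<forall>i\<in>{1..r}. \<forall>k\<in>{1..d+2}. card (R i \<inter> bmz_block d r c k) \<le> 1)"

definition maximal_rainbow_partition :: "nat \<Rightarrow> nat \<Rightarrow> (nat \<Rightarrow> 'a) \<Rightarrow> (nat \<Rightarrow> 'a set) \<Rightarrow> bool" where
  "maximal_rainbow_partition d r c R \<longleftrightarrow>
     rainbow_partition d r c R \<and> (\<Union>i\<in>{1..r}. R i) = bmz_ground d r c"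

definition bmz_R :: "nat \<Rightarrow> nat \<Rightarrow> (nat \<Rightarrow> 'a) \<Rightarrow> (nat \<Rightarrow> 'a set) set" where
  "bmz_R d r c = {R. maximal_rainbow_partition d r c R \<and> bmz_z d r c \<in> R r}"

definition remove_pt :: "(nat \<Rightarrow> 'a set) \<Rightarrow> 'a \<Rightarrow> (nat \<Rightarrow> 'a set)" where
  "remove_pt R a = (\<lambda>i. R i - {a})"

definition regular_simplex_centered :: "nat \<Rightarrow> (nat \<Rightarrow> real^'m) \<Rightarrow> bool" where
  "regular_simplex_centered r w \<longleftrightarrow>
     (\<Sum>i=1..r. w i) = 0 \<and>
     (\<exists>s>0. \<forall>i\<in>{1..r}. \<forall>j\<in>{1..r}. i \<noteq> j \<longrightarrow> dist (w i) (w j) = s)"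

text \<open>phi_i(x) = (x,1) tensor w_i in R^((d+1)(r-1)), realized as the (d+1) x (r-1) array;
  the extra coordinate "1" of (x,1) is indexed by None.\<close>
definition bmz_phi :: "(nat \<Rightarrow> real^'m) \<Rightarrow> nat \<Rightarrow> real^'d \<Rightarrow> real^'m^('d option)" where
  "bmz_phi w i x = (\<chi> j l. (case j of None \<Rightarrow> 1 | Some t \<Rightarrow> x $ t) * (w i $ l))"

definition bmz_Phi :: "(nat \<Rightarrow> real^'m) \<Rightarrow> nat \<Rightarrow> (nat \<Rightarrow> (real^'d) set) \<Rightarrow> (real^'m^('d option)) set" where
  "bmz_Phi w r P = (\<Union>i\<in>{1..r}. bmz_phi w i ` P i)"

definition bmz_cls :: "nat \<Rightarrow> (nat \<Rightarrow> 'a set) \<Rightarrow> 'a \<Rightarrow> nat" where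
  "bmz_cls r R p = (THE i. i \<in> {1..r} \<and> p \<in> R i)"

definition bmz_pi :: "nat \<Rightarrow> (nat \<Rightarrow> 'a) \<Rightarrow> (nat \<Rightarrow> 'a set) \<Rightarrow> nat \<Rightarrow> nat \<Rightarrow> nat" where
  "bmz_pi r c R k = (\<lambda>j.
     if j \<in> {1..r-1} then bmz_cls r R (c ((k - 1) * (r - 1) + j))
     else if j = r then
       (THE i. i \<in> {1..r} \<and> i \<notin> (\<lambda>j'. bmz_cls r R (c ((k - 1) * (r - 1) + j'))) ` {1..r-1})
     else j)"

definition csgn :: "nat \<Rightarrow> nat \<Rightarrow> (nat \<Rightarrow> 'a) \<Rightarrow> (nat \<Rightarrow> 'a set) \<Rightarrow> int" where
  "csgn d r c R = (\<Prod>k=1..d+1. sign (bmz_pi r c R k))"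

end

theory Submission
  imports Defs
begin


definition Pof :: "nat \<Rightarrow> (nat \<Rightarrow> nat) \<Rightarrow> nat \<Rightarrow> nat" where
  "Pof r g = (\<lambda>j. if j \<in> {1..r-1} then g j
     else if j = r then (THE i. i \<in> {1..r} \<and> i \<notin> g ` {1..r-1}) else j)"

lemma Pof_low: "j \<in> {1..r-1} \<Longrightarrow> Pof r g j = g j" by (simp add: Pof_def)
lemma Pof_top: assumes "(r::nat) \<ge> 1" shows "Pof r g r = (THE i. i \<in> {1..r} \<and> i \<notin> g ` {1..r-1})"
proof -
  have h: "\<not> (r \<in> {1..r-1})" using assms by simp
  show ?thesis by (simp only: Pof_def if_not_P[OF h] if_P[OF refl])
qed
lemma Pof_out: assumes "j \<notin> {1..r}" "(r::nat) \<ge> 1" shows "Pof r g j = j"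
proof -
  have h: "\<not> (j \<in> {1..r-1})" "j \<noteq> r" using assms by auto
  show ?thesis by (simp only: Pof_def if_not_P[OF h(1)] if_not_P[OF h(2)])
qed

lemma missing_unique:
  fixes r :: nat and g :: "nat \<Rightarrow> nat"
  assumes r: "r \<ge> 1" and inj: "inj_on g {1..r-1}" and sub: "g ` {1..r-1} \<subseteq> {1..r}"
  shows "\<exists>m. {1..r} - g ` {1..r-1} = {m}"
proof -
  have "card (g ` {1..r-1}) = r - 1" using inj by (simp add: card_image)
  hence "card ({1..r} - g ` {1..r-1}) = 1"
    using sub r by (simp add: card_Diff_subset)
  thus ?thesis by (simp add: card_1_singleton_iff)
qed

lemma Pof_r:
  fixes r :: nat and g :: "nat \<Rightarrow> nat"
  assumes r: "r \<ge> 1" and inj: "inj_on g {1..r-1}" and sub: "g ` {1..r-1} \<subseteq> {1..r}"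
      and m: "{1..r} - g ` {1..r-1} = {m}"
  shows "Pof r g r = m"
proof -
  have "(THE i. i \<in> {1..r} \<and> i \<notin> g ` {1..r-1}) = m"
    by (rule the_equality) (use m in blast)+
  thus ?thesis using Pof_top[OF r] by simp
qed

lemma Pof_permutes:
  fixes r :: nat and g :: "nat \<Rightarrow> nat"
  assumes r: "r \<ge> 1" and inj: "inj_on g {1..r-1}" and sub: "g ` {1..r-1} \<subseteq> {1..r}"
  shows "Pof r g permutes {1..r}"
proof -
  obtain m where m: "{1..r} - g ` {1..r-1} = {m}" using missing_unique[OF assms] by blast
  have Pr: "Pof r g r = m" using Pof_r[OF assms m] .
  have inj2: "inj_on (Pof r g) {1..r}"
  proof (rule inj_onI)
    fix x y assume x: "x \<in> {1..r}" and y: "y \<in> {1..r}" and e: "Pof r g x = Pof r g y"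
    have xc: "x \<in> {1..r-1} \<or> x = r" and yc: "y \<in> {1..r-1} \<or> y = r" using x y by auto
    show "x = y"
    proof (cases "x = r")
      case True
      show ?thesis
      proof (cases "y = r")
        case False
        then have "y \<in> {1..r-1}" using yc by auto
        then have "g y \<in> g ` {1..r-1}" by blast
        have mn: "m \<notin> g ` {1..r-1}" using m by blast
        have "m = g y" using True e Pr Pof_low[of y r g] \<open>y \<in> {1..r-1}\<close> by simp
        with mn \<open>g y \<in> g ` {1..r-1}\<close> show ?thesis by simp
      qed (use True in simp)
    next
      case False
      then have xl: "x \<in> {1..r-1}" using xc by auto
      show ?thesis
      proof (cases "y = r")
        case True
        have "g x \<in> g ` {1..r-1}" using xl by blast
        have mn: "m \<notin> g ` {1..r-1}" using m by blast
        have "m = g x" using True e Pr Pof_low[of x r g] xl by simp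
        with mn \<open>g x \<in> g ` {1..r-1}\<close> show ?thesis by simp
      next
        case False then have "y \<in> {1..r-1}" using yc by auto
        then show ?thesis using xl e inj Pof_low[of x r g] Pof_low[of y r g] by (auto simp: inj_on_def)
      qed
    qed
  qed
  have img: "Pof r g ` {1..r} \<subseteq> {1..r}"
  proof
    fix y assume "y \<in> Pof r g ` {1..r}"
    then obtain x where x: "x \<in> {1..r}" "y = Pof r g x" by auto
    show "y \<in> {1..r}"
    proof (cases "x = r")
      case True then show ?thesis using x Pr m by auto
    next
      case False then have "x \<in> {1..r-1}" using x by auto
      then have "g x \<in> g ` {1..r-1}" by blast
      then have "g x \<in> {1..r}" using sub by blast
      then show ?thesis using x \<open>x \<in> {1..r-1}\<close> Pof_low[of x r g] by auto
    qed
  qed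
  have "bij_betw (Pof r g) {1..r} {1..r}"
    using inj2 img by (simp add: bij_betw_def endo_inj_surj)
  moreover have "\<And>x. x \<notin> {1..r} \<Longrightarrow> Pof r g x = x" using r by (simp add: Pof_out)
  ultimately show ?thesis by (rule bij_imp_permutes)
qed

lemma Pof_permutation:
  fixes r :: nat and g :: "nat \<Rightarrow> nat"
  assumes "r \<ge> 1" "inj_on g {1..r-1}" "g ` {1..r-1} \<subseteq> {1..r}"
  shows "permutation (Pof r g)"
  using Pof_permutes[OF assms] by (rule permutes_imp_permutation[rotated]) simp

lemma Pof_swap:
  fixes r :: nat and g :: "nat \<Rightarrow> nat"
  assumes r: "r \<ge> 1" and inj: "inj_on g {1..r-1}" and sub: "g ` {1..r-1} \<subseteq> {1..r}"
    and ja: "ja \<in> {1..r-1}"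
    and agree: "\<And>j. j \<in> {1..r-1} \<Longrightarrow> j \<noteq> ja \<Longrightarrow> g' j = g j"
    and gja: "g' ja = Pof r g r"
  shows "sign (Pof r g') = - sign (Pof r g)"
proof -
  obtain m where m: "{1..r} - g ` {1..r-1} = {m}" using missing_unique[OF r inj sub] by blast
  have Pr: "Pof r g r = m" using Pof_r[OF r inj sub m] .
  have mr: "m \<in> {1..r}" "m \<notin> g ` {1..r-1}" using m by auto
  have imgeq: "g' ` {1..r-1} = (g ` {1..r-1} - {g ja}) \<union> {m}"
  proof -
    have "g' ` {1..r-1} = g' ` ({1..r-1} - {ja}) \<union> {g' ja}" using ja by auto
    also have "g' ` ({1..r-1} - {ja}) = g ` ({1..r-1} - {ja})" using agree by (auto intro!: image_cong)
    also have "g ` ({1..r-1} - {ja}) = g ` {1..r-1} - {g ja}"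
      using inj ja by (simp add: inj_on_image_set_diff)
    finally show ?thesis using gja Pr by simp
  qed
  have inj': "inj_on g' {1..r-1}"
  proof (rule inj_onI)
    fix x y assume x: "x \<in> {1..r-1}" and y: "y \<in> {1..r-1}" and e: "g' x = g' y"
    show "x = y"
    proof (cases "x = ja"; cases "y = ja")
      assume "x = ja" "y = ja" thus ?thesis by simp
    next
      assume "x = ja" "y \<noteq> ja" thus ?thesis using e agree y gja Pr mr by auto
    next
      assume "x \<noteq> ja" "y = ja" thus ?thesis using e agree x gja Pr mr by auto
    next
      assume "x \<noteq> ja" "y \<noteq> ja" thus ?thesis using e agree x y inj by (auto simp: inj_on_def)
    qed
  qed
  have gjar: "g ja \<in> {1..r}" using sub ja by blast
  have sub': "g' ` {1..r-1} \<subseteq> {1..r}" using imgeq sub mr by auto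
  have neq0: "g ja \<noteq> m" using mr ja by auto
  have m': "{1..r} - g' ` {1..r-1} = {g ja}"
  proof (rule set_eqI)
    fix x
    show "x \<in> {1..r} - g' ` {1..r-1} \<longleftrightarrow> x \<in> {g ja}"
    proof
      assume x: "x \<in> {1..r} - g' ` {1..r-1}"
      hence x1: "x \<in> {1..r}" and x2: "x \<notin> (g ` {1..r-1} - {g ja}) \<union> {m}" using imgeq by auto
      show "x \<in> {g ja}"
      proof (rule ccontr)
        assume "x \<notin> {g ja}"
        hence "x \<notin> g ` {1..r-1}" using x2 by auto
        hence "x \<in> {1..r} - g ` {1..r-1}" using x1 by simp
        hence "x \<in> {m}" using m by (simp only:)
        hence "x = m" by simp
        thus False using x2 by simp
      qed
    next
      assume "x \<in> {g ja}"
      hence "x = g ja" by simp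
      thus "x \<in> {1..r} - g' ` {1..r-1}" using imgeq gjar neq0 by simp
    qed
  qed
  have Pr': "Pof r g' r = g ja" using Pof_r[OF r inj' sub' m'] .
  have neq: "g ja \<noteq> m" using mr ja by auto
  have eq: "Pof r g' = Transposition.transpose (g ja) m \<circ> Pof r g"
  proof
    fix j
    show "Pof r g' j = (Transposition.transpose (g ja) m \<circ> Pof r g) j"
    proof (cases "j \<in> {1..r-1}")
      case True
      show ?thesis
      proof (cases "j = ja")
        case True
        then show ?thesis using ja gja Pr Pof_low[of ja r g] Pof_low[of ja r g'] by simp
      next
        case False
        have "g j \<noteq> g ja" using inj True ja False by (auto simp: inj_on_def)
        moreover have "g j \<noteq> m" using mr True by auto
        ultimately show ?thesis using True False agree Pof_low[of j r g] Pof_low[of j r g'] by (simp add: transpose_def)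
      qed
    next
      case False
      show ?thesis
      proof (cases "j = r")
        case True
        then show ?thesis using Pr Pr' by simp
      next
        case False2: False
        have "j \<notin> {1..r}" using False False2 by auto
        hence "j \<noteq> g ja" "j \<noteq> m" using gjar mr by auto
        then show ?thesis using \<open>j \<notin> {1..r}\<close> Pof_out[of j r g, OF _ r] Pof_out[of j r g', OF _ r] by (simp add: transpose_def)
      qed
    qed
  qed
  show ?thesis unfolding eq
    by (simp add: sign_compose[OF permutation_swap_id Pof_permutation[OF r inj sub]] sign_swap_id neq)
qed



lemma idx_inj:
  fixes k k' j j' q :: nat
  assumes "k \<ge> 1" "k' \<ge> 1" "j \<in> {1..q}" "j' \<in> {1..q}"
    and e: "(k-1)*q + j = (k'-1)*q + j'"
  shows "k = k' \<and> j = j'"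
proof -
  have q: "q > 0" using assms by auto
  define u where "u = k - 1"
  define u' where "u' = k' - 1"
  define f where "f = j - 1"
  define f' where "f' = j' - 1"
  have e2: "u*q + f = u'*q + f'" using e assms unfolding u_def u'_def f_def f'_def by auto
  have fq: "f < q" "f' < q" using assms unfolding f_def f'_def by auto
  have "(u*q + f) div q = u" "(u*q + f) mod q = f" using fq by simp_all
  moreover have "(u'*q + f') div q = u'" "(u'*q + f') mod q = f'" using fq by simp_all
  ultimately have "u = u'" "f = f'" using e2 by metis+
  thus ?thesis using assms unfolding u_def u'_def f_def f'_def by auto
qed

lemma idx_le:
  fixes k j q d :: nat
  assumes "k \<in> {1..d+1}" "j \<in> {1..q}"
  shows "(k-1)*q + j \<ge> 1" "(k-1)*q + j \<le> (d+1)*q"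
proof -
  show "(k-1)*q + j \<ge> 1" using assms by auto
  have "(k-1)*q + j \<le> (k-1)*q + q" using assms by auto
  also have "\<dots> = k*q" using assms by (cases k) auto
  also have "\<dots> \<le> (d+1)*q" using assms by (intro mult_le_mono1) auto
  finally show "(k-1)*q + j \<le> (d+1)*q" .
qed

lemma idx_decomp:
  fixes t q d :: nat
  assumes "t \<in> {1..(d+1)*q}"
  shows "\<exists>k\<in>{1..d+1}. \<exists>j\<in>{1..q}. t = (k-1)*q + j"
proof -
  have q: "q > 0" using assms by (cases q) auto
  define k where "k = (t-1) div q + 1"
  define j where "j = (t-1) mod q + 1"
  have "t - 1 < (d+1)*q" using assms by auto
  hence "(t-1) div q < d + 1" using q by (simp add: div_less_iff_less_mult)
  hence k: "k \<in> {1..d+1}" unfolding k_def by auto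
  have j: "j \<in> {1..q}" unfolding j_def using q by (auto simp: Suc_le_eq)
  have "(k-1)*q + j = (t-1) div q * q + (t-1) mod q + 1" unfolding k_def j_def by simp
  also have "\<dots> = t" using assms by simp
  finally show ?thesis using k j by metis
qed

lemma card_le1_iff: "finite S \<Longrightarrow> card S \<le> 1 \<longleftrightarrow> (\<forall>x\<in>S. \<forall>y\<in>S. x = y)"
  using card_le_Suc0_iff_eq by (metis One_nat_def)

context
  fixes d r :: nat and c :: "nat \<Rightarrow> 'a"
  assumes r2: "r \<ge> 2" and injc: "inj_on c {1 .. bmzN d r + 1}"
begin

lemma N_eq: "bmzN d r = (d+1)*(r-1)" by (simp add: bmzN_def)

lemma blk_eq: "k \<in> {1..d+1} \<Longrightarrow> bmz_block d r c k = (\<lambda>j. c ((k-1)*(r-1)+j)) ` {1..r-1}"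
proof -
  assume k: "k \<in> {1..d+1}"
  have "{(k - 1) * (r - 1) + 1 .. k * (r - 1)} = (\<lambda>j. (k-1)*(r-1)+j) ` {1..r-1}"
  proof -
    have kk: "k * (r-1) = (k-1)*(r-1) + (r-1)" using k by (cases k) auto
    show ?thesis unfolding kk
    proof (rule set_eqI, rule iffI)
      fix x assume x: "x \<in> {(k - 1) * (r - 1) + 1..(k - 1) * (r - 1) + (r - 1)}"
      hence "x = (k-1)*(r-1) + (x - (k-1)*(r-1))" "x - (k-1)*(r-1) \<in> {1..r-1}" by auto
      thus "x \<in> (\<lambda>j. (k-1)*(r-1)+j) ` {1..r-1}" by (metis image_eqI)
    qed auto
  qed
  moreover have "bmz_block d r c k = c ` {(k - 1) * (r - 1) + 1 .. k * (r - 1)}"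
    using k by (simp add: bmz_block_def)
  ultimately show ?thesis by (metis image_image)
qed

lemma idx_in: "k \<in> {1..d+1} \<Longrightarrow> j \<in> {1..r-1} \<Longrightarrow> (k-1)*(r-1)+j \<in> {1..bmzN d r}"
  using idx_le[of k d j "r-1"] by (simp add: N_eq)

lemma c_idx_inj: "k \<in> {1..d+1} \<Longrightarrow> j \<in> {1..r-1} \<Longrightarrow> k' \<in> {1..d+1} \<Longrightarrow> j' \<in> {1..r-1} \<Longrightarrow>
   c ((k-1)*(r-1)+j) = c ((k'-1)*(r-1)+j') \<Longrightarrow> k = k' \<and> j = j'"
proof -
  assume a: "k \<in> {1..d+1}" "j \<in> {1..r-1}" "k' \<in> {1..d+1}" "j' \<in> {1..r-1}"
    and e: "c ((k-1)*(r-1)+j) = c ((k'-1)*(r-1)+j')"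
  have "(k-1)*(r-1)+j = (k'-1)*(r-1)+j'"
    using inj_onD[OF injc e] idx_in[OF a(1,2)] idx_in[OF a(3,4)] by auto
  thus ?thesis using idx_inj[of k k' j "r-1" j'] a by auto
qed

lemma c_idx_ne_z: "k \<in> {1..d+1} \<Longrightarrow> j \<in> {1..r-1} \<Longrightarrow> c ((k-1)*(r-1)+j) \<noteq> bmz_z d r c"
proof
  assume a: "k \<in> {1..d+1}" "j \<in> {1..r-1}" and e: "c ((k-1)*(r-1)+j) = bmz_z d r c"
  have "(k-1)*(r-1)+j = bmzN d r + 1"
    using inj_onD[OF injc e[unfolded bmz_z_def]] idx_in[OF a] by auto
  thus False using idx_in[OF a] by auto
qed

lemma ground_decomp:
  assumes "p \<in> bmz_ground d r c" "p \<noteq> bmz_z d r c"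
  shows "\<exists>k\<in>{1..d+1}. \<exists>j\<in>{1..r-1}. p = c ((k-1)*(r-1)+j)"
proof -
  obtain t where t: "t \<in> {1..bmzN d r + 1}" "p = c t" using assms by (auto simp: bmz_ground_def)
  have "t \<noteq> bmzN d r + 1" using t assms by (auto simp: bmz_z_def)
  hence "t \<in> {1..(d+1)*(r-1)}" using t by (auto simp: N_eq)
  thus ?thesis using idx_decomp[of t d "r-1"] t by auto
qed

lemma blk_finite: "finite (bmz_block d r c k)" by (simp add: bmz_block_def)

lemma blk_card: "k \<in> {1..d+1} \<Longrightarrow> card (bmz_block d r c k) = r - 1"
proof -
  assume k: "k \<in> {1..d+1}"
  have "inj_on (\<lambda>j. c ((k-1)*(r-1)+j)) {1..r-1}"
    by (rule inj_onI) (use c_idx_inj[OF k _ k] in blast)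
  thus ?thesis using blk_eq[OF k] by (simp add: card_image)
qed

lemma blk_unique:
  assumes "p \<in> bmz_block d r c k" "p \<in> bmz_block d r c k'" "k \<in> {1..d+2}" "k' \<in> {1..d+2}"
  shows "k = k'"
proof -
  have A: "\<And>k. k \<in> {1..d+1} \<Longrightarrow> p \<in> bmz_block d r c k \<Longrightarrow> p \<noteq> bmz_z d r c"
    using c_idx_ne_z by (auto simp: blk_eq)
  show ?thesis
  proof (cases "k = d+2")
    case True
    hence pz: "p = bmz_z d r c" using assms by (simp add: bmz_block_def)
    show ?thesis
    proof (rule ccontr)
      assume "k \<noteq> k'" hence "k' \<in> {1..d+1}" using assms True by auto
      thus False using A pz assms by blast
    qed
  next
    case False
    hence k: "k \<in> {1..d+1}" using assms by auto
    hence pz: "p \<noteq> bmz_z d r c" using A assms by blast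
    have k': "k' \<in> {1..d+1}"
    proof (rule ccontr)
      assume "k' \<notin> {1..d+1}" hence "k' = d+2" using assms by auto
      thus False using pz assms by (simp add: bmz_block_def)
    qed
    obtain j where j: "j \<in> {1..r-1}" "p = c ((k-1)*(r-1)+j)" using assms k by (auto simp: blk_eq)
    obtain j' where j': "j' \<in> {1..r-1}" "p = c ((k'-1)*(r-1)+j')" using assms k' by (auto simp: blk_eq)
    show ?thesis using c_idx_inj[OF k j(1) k' j'(1)] j j' by auto
  qed
qed

end


lemma simplex_nonzero:
  fixes w :: "nat \<Rightarrow> real^'m"
  assumes r: "r \<ge> 2" and reg: "regular_simplex_centered r w" and i: "i \<in> {1..r}"
  shows "w i \<noteq> 0"
proof
  assume wi: "w i = 0"
  obtain s where s: "s > 0" and ds: "\<And>a b. a \<in> {1..r} \<Longrightarrow> b \<in> {1..r} \<Longrightarrow> a \<noteq> b \<Longrightarrow> dist (w a) (w b) = s"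
    using reg unfolding regular_simplex_centered_def by blast
  have sum0: "(\<Sum>l=1..r. w l) = 0" using reg unfolding regular_simplex_centered_def by blast
  obtain j where j: "j \<in> {1..r}" "j \<noteq> i"
  proof (cases "i = 1")
    case True then show ?thesis using that[of 2] r by auto
  next
    case False then show ?thesis using that[of 1] r by auto
  qed
  have nl: "\<And>l. l \<in> {1..r} \<Longrightarrow> l \<noteq> i \<Longrightarrow> inner (w l) (w l) = s^2"
  proof -
    fix l assume "l \<in> {1..r}" "l \<noteq> i"
    hence "dist (w l) (w i) = s" using ds i by blast
    hence "norm (w l) = s" using wi by (simp add: dist_norm)
    thus "inner (w l) (w l) = s^2" by (simp add: power2_norm_eq_inner[symmetric])
  qed
  have nonneg: "\<And>l. l \<in> {1..r} \<Longrightarrow> inner (w l) (w j) \<ge> 0"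
  proof -
    fix l assume l: "l \<in> {1..r}"
    show "inner (w l) (w j) \<ge> 0"
    proof (cases "l = i")
      case True then show ?thesis using wi by simp
    next
      case li: False
      show ?thesis
      proof (cases "l = j")
        case True then show ?thesis by simp
      next
        case False
        have "dist (w l) (w j) = s" using ds l j False by blast
        hence "inner (w l - w j) (w l - w j) = s^2"
          by (simp add: dist_norm power2_norm_eq_inner[symmetric])
        hence "inner (w l) (w l) - 2 * inner (w l) (w j) + inner (w j) (w j) = s^2"
          by (simp add: inner_diff inner_commute)
        hence "2 * inner (w l) (w j) = s^2" using nl[OF l li] nl[OF j(1) j(2)] by simp
        moreover have "s^2 \<ge> 0" by simp
        ultimately show ?thesis by linarith
      qed
    qed
  qed
  have "0 = inner (\<Sum>l=1..r. w l) (w j)" using sum0 by simp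
  also have "\<dots> = (\<Sum>l=1..r. inner (w l) (w j))" by (simp add: inner_sum_left)
  also have "\<dots> \<ge> inner (w j) (w j)"
    by (rule member_le_sum) (use nonneg j in auto)
  finally have "inner (w j) (w j) \<le> 0" by simp
  moreover have "inner (w j) (w j) = s^2" using nl j by blast
  ultimately show False using s by simp
qed

lemma phi_inj:
  fixes w :: "nat \<Rightarrow> real^'m" and x y :: "real^'d"
  assumes r: "r \<ge> 2" and reg: "regular_simplex_centered r w"
    and i: "i \<in> {1..r}" and j: "j \<in> {1..r}" and e: "bmz_phi w i x = bmz_phi w j y"
  shows "i = j \<and> x = y"
proof -
  have row: "\<And>a b. vec_nth (vec_nth (bmz_phi w i x) a) b = vec_nth (vec_nth (bmz_phi w j y) a) b" using e by simp
  have "\<And>l. w i $ l = w j $ l" using row[of None] by (simp add: bmz_phi_def)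
  hence wij: "w i = w j" by (simp add: vec_eq_iff)
  have ij: "i = j"
  proof (rule ccontr)
    assume "i \<noteq> j"
    then obtain s where "s > 0" "dist (w i) (w j) = s"
      using reg i j unfolding regular_simplex_centered_def by blast
    thus False using wij by simp
  qed
  obtain l where l: "w i $ l \<noteq> 0" using simplex_nonzero[OF r reg i] by (auto simp: vec_eq_iff)
  have "\<And>t. x $ t * w i $ l = y $ t * w i $ l" using row[of "Some t" l for t] ij by (simp add: bmz_phi_def)
  hence "\<And>t. x $ t = y $ t" using l by simp
  thus ?thesis using ij by (simp add: vec_eq_iff)
qed

lemma Phi_mono:
  assumes "\<And>i. i \<in> {1..r} \<Longrightarrow> P i \<subseteq> Q i"
  shows "bmz_Phi w r P \<subseteq> bmz_Phi w r Q"
  using assms unfolding bmz_Phi_def by blast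

lemma Phi_sub_D:
  fixes w :: "nat \<Rightarrow> real^'m" and P Q :: "nat \<Rightarrow> (real^'d) set"
  assumes r: "r \<ge> 2" and reg: "regular_simplex_centered r w"
    and sub: "bmz_Phi w r P \<subseteq> bmz_Phi w r Q" and i: "i \<in> {1..r}"
  shows "P i \<subseteq> Q i"
proof
  fix p assume p: "p \<in> P i"
  hence "bmz_phi w i p \<in> bmz_Phi w r Q" using sub i unfolding bmz_Phi_def by blast
  then obtain j q where "j \<in> {1..r}" "q \<in> Q j" "bmz_phi w i p = bmz_phi w j q"
    unfolding bmz_Phi_def by blast
  thus "p \<in> Q i" using phi_inj[OF r reg i] by blast
qed



definition gk :: "nat \<Rightarrow> (nat \<Rightarrow> 'a) \<Rightarrow> (nat \<Rightarrow> 'a set) \<Rightarrow> nat \<Rightarrow> nat \<Rightarrow> nat" where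
  "gk r c R k = (\<lambda>j. bmz_cls r R (c ((k-1)*(r-1)+j)))"

lemma pi_eq: "bmz_pi r c R k = Pof r (gk r c R k)"
  unfolding bmz_pi_def Pof_def gk_def by (rule refl)

lemma Pof_cong: "(\<And>j. j \<in> {1..r-1} \<Longrightarrow> g j = g' j) \<Longrightarrow> Pof r g = Pof r g'"
proof -
  assume h: "\<And>j. j \<in> {1..r-1} \<Longrightarrow> g j = g' j"
  have "g ` {1..r-1} = g' ` {1..r-1}" using h by (auto intro!: image_cong)
  thus ?thesis unfolding Pof_def using h by (auto intro!: ext)
qed

context
  fixes d r :: nat and c :: "nat \<Rightarrow> 'a"
  assumes r2: "r \<ge> 2" and injc: "inj_on c {1 .. bmzN d r + 1}"
begin

lemmas blk_eq' = blk_eq[OF r2 injc]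
lemmas c_idx_inj' = c_idx_inj[OF r2 injc]
lemmas c_idx_ne_z' = c_idx_ne_z[OF r2 injc]
lemmas ground_decomp' = ground_decomp[OF r2 injc]
lemmas blk_card' = blk_card[OF r2 injc]
lemmas blk_unique' = blk_unique[OF r2 injc]
lemmas blk_finite' = blk_finite[OF r2 injc]

lemma mk_R:
  assumes "\<And>i. i \<notin> {1..r} \<Longrightarrow> R i = {}"
    and "\<And>i. i \<in> {1..r} \<Longrightarrow> R i \<subseteq> bmz_ground d r c"
    and "\<And>i j p. i \<in> {1..r} \<Longrightarrow> j \<in> {1..r} \<Longrightarrow> i \<noteq> j \<Longrightarrow> p \<in> R i \<Longrightarrow> p \<in> R j \<Longrightarrow> False"
    and "\<And>i k p p'. i \<in> {1..r} \<Longrightarrow> k \<in> {1..d+2} \<Longrightarrow> p \<in> R i \<Longrightarrow> p \<in> bmz_block d r c k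
           \<Longrightarrow> p' \<in> R i \<Longrightarrow> p' \<in> bmz_block d r c k \<Longrightarrow> p = p'"
    and "\<And>p. p \<in> bmz_ground d r c \<Longrightarrow> \<exists>i\<in>{1..r}. p \<in> R i"
    and "bmz_z d r c \<in> R r"
  shows "R \<in> bmz_R d r c"
proof -
  have card: "\<forall>i\<in>{1..r}. \<forall>k\<in>{1..d+2}. card (R i \<inter> bmz_block d r c k) \<le> 1"
  proof (intro ballI)
    fix i k assume "i \<in> {1..r}" "k \<in> {1..d+2}"
    have f: "finite (R i \<inter> bmz_block d r c k)" using blk_finite'[of k] by simp
    show "card (R i \<inter> bmz_block d r c k) \<le> 1"
      unfolding card_le1_iff[OF f] using assms(4) \<open>i \<in> {1..r}\<close> \<open>k \<in> {1..d+2}\<close> by blast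
  qed
  have disj: "\<forall>i\<in>{1..r}. \<forall>j\<in>{1..r}. i \<noteq> j \<longrightarrow> R i \<inter> R j = {}"
    using assms(3) by blast
  have cov: "(\<Union>i\<in>{1..r}. R i) = bmz_ground d r c"
  proof
    show "(\<Union>i\<in>{1..r}. R i) \<subseteq> bmz_ground d r c" using assms(2) by blast
    show "bmz_ground d r c \<subseteq> (\<Union>i\<in>{1..r}. R i)" using assms(5) by blast
  qed
  have "rainbow_partition d r c R"
    unfolding rainbow_partition_def using assms(1,2) disj card by blast
  thus ?thesis unfolding bmz_R_def maximal_rainbow_partition_def using cov assms(6) by blast
qed

context
  fixes R :: "nat \<Rightarrow> 'a set"
  assumes RR: "R \<in> bmz_R d r c"
begin

lemma Rout: "i \<notin> {1..r} \<Longrightarrow> R i = {}"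
  using RR by (auto simp: bmz_R_def maximal_rainbow_partition_def rainbow_partition_def)
lemma Rsub: "i \<in> {1..r} \<Longrightarrow> R i \<subseteq> bmz_ground d r c"
  using RR by (auto simp: bmz_R_def maximal_rainbow_partition_def rainbow_partition_def)
lemma Rdisj: "i \<in> {1..r} \<Longrightarrow> j \<in> {1..r} \<Longrightarrow> p \<in> R i \<Longrightarrow> p \<in> R j \<Longrightarrow> i = j"
  using RR unfolding bmz_R_def maximal_rainbow_partition_def rainbow_partition_def by blast
lemma Rcov: "p \<in> bmz_ground d r c \<Longrightarrow> \<exists>i\<in>{1..r}. p \<in> R i"
  using RR unfolding bmz_R_def maximal_rainbow_partition_def by blast
lemma Rz: "bmz_z d r c \<in> R r"
  using RR unfolding bmz_R_def by blast
lemma Rrain: "i \<in> {1..r} \<Longrightarrow> k \<in> {1..d+2} \<Longrightarrow> p \<in> R i \<Longrightarrow> p \<in> bmz_block d r c k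
           \<Longrightarrow> p' \<in> R i \<Longrightarrow> p' \<in> bmz_block d r c k \<Longrightarrow> p = p'"
proof -
  assume a: "i \<in> {1..r}" "k \<in> {1..d+2}" "p \<in> R i" "p \<in> bmz_block d r c k"
    "p' \<in> R i" "p' \<in> bmz_block d r c k"
  have "card (R i \<inter> bmz_block d r c k) \<le> 1"
    using RR a(1,2) unfolding bmz_R_def maximal_rainbow_partition_def rainbow_partition_def by blast
  moreover have f: "finite (R i \<inter> bmz_block d r c k)" using blk_finite'[of k] by simp
  ultimately show "p = p'" using a unfolding card_le1_iff[OF f] by blast
qed

lemma cls_eq: "i \<in> {1..r} \<Longrightarrow> p \<in> R i \<Longrightarrow> bmz_cls r R p = i"
  unfolding bmz_cls_def by (rule the_equality) (use Rdisj in blast)+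

lemma cls_in: "p \<in> bmz_ground d r c \<Longrightarrow> bmz_cls r R p \<in> {1..r} \<and> p \<in> R (bmz_cls r R p)"
  using Rcov cls_eq by metis

lemma c_in_ground: "k \<in> {1..d+1} \<Longrightarrow> j \<in> {1..r-1} \<Longrightarrow> c ((k-1)*(r-1)+j) \<in> bmz_ground d r c"
proof -
  assume a: "k \<in> {1..d+1}" "j \<in> {1..r-1}"
  have "(k-1)*(r-1)+j \<in> {1..bmzN d r + 1}" using idx_in[OF r2 injc a] by auto
  thus ?thesis unfolding bmz_ground_def by (rule imageI)
qed

lemma g_sub: "k \<in> {1..d+1} \<Longrightarrow> gk r c R k ` {1..r-1} \<subseteq> {1..r}"
proof
  fix y assume k: "k \<in> {1..d+1}" and "y \<in> gk r c R k ` {1..r-1}"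
  then obtain j where j: "j \<in> {1..r-1}" "y = bmz_cls r R (c ((k-1)*(r-1)+j))" by (auto simp: gk_def)
  have "c ((k-1)*(r-1)+j) \<in> bmz_ground d r c" using c_in_ground[OF k j(1)] .
  thus "y \<in> {1..r}" using cls_in j by auto
qed

lemma c_in_blk: "k \<in> {1..d+1} \<Longrightarrow> j \<in> {1..r-1} \<Longrightarrow> c ((k-1)*(r-1)+j) \<in> bmz_block d r c k"
  using blk_eq' by auto

lemma g_inj: "k \<in> {1..d+1} \<Longrightarrow> inj_on (gk r c R k) {1..r-1}"
proof (rule inj_onI)
  fix x y assume k: "k \<in> {1..d+1}" and x: "x \<in> {1..r-1}" and y: "y \<in> {1..r-1}"
    and e: "gk r c R k x = gk r c R k y"
  let ?i = "bmz_cls r R (c ((k-1)*(r-1)+x))"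
  have A: "?i \<in> {1..r}" "c ((k-1)*(r-1)+x) \<in> R ?i" using cls_in c_in_ground[OF k x] by auto
  have B: "c ((k-1)*(r-1)+y) \<in> R ?i" using cls_in c_in_ground[OF k y] e by (auto simp: gk_def)
  have "c ((k-1)*(r-1)+x) = c ((k-1)*(r-1)+y)"
    by (rule Rrain[OF A(1) _ A(2) c_in_blk[OF k x] B c_in_blk[OF k y]]) (use k in auto)
  thus "x = y" using c_idx_inj'[OF k x k y] by auto
qed

lemma miss_iff: "k \<in> {1..d+1} \<Longrightarrow> i \<in> {1..r} \<Longrightarrow>
   (R i \<inter> bmz_block d r c k = {}) \<longleftrightarrow> i \<notin> gk r c R k ` {1..r-1}"
proof
  assume k: "k \<in> {1..d+1}" and i: "i \<in> {1..r}" and E: "R i \<inter> bmz_block d r c k = {}"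
  show "i \<notin> gk r c R k ` {1..r-1}"
  proof
    assume "i \<in> gk r c R k ` {1..r-1}"
    then obtain j where j: "j \<in> {1..r-1}" "i = bmz_cls r R (c ((k-1)*(r-1)+j))" by (auto simp: gk_def)
    hence "c ((k-1)*(r-1)+j) \<in> R i" using cls_in c_in_ground[OF k j(1)] by auto
    thus False using E c_in_blk[OF k j(1)] by auto
  qed
next
  assume k: "k \<in> {1..d+1}" and i: "i \<in> {1..r}" and N: "i \<notin> gk r c R k ` {1..r-1}"
  show "R i \<inter> bmz_block d r c k = {}"
  proof (rule ccontr)
    assume "R i \<inter> bmz_block d r c k \<noteq> {}"
    then obtain p where p: "p \<in> R i" "p \<in> bmz_block d r c k" by auto
    then obtain j where j: "j \<in> {1..r-1}" "p = c ((k-1)*(r-1)+j)" using blk_eq'[OF k] by auto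
    have "gk r c R k j = i" using cls_eq[OF i p(1)] j by (simp add: gk_def)
    thus False using N j by auto
  qed
qed

end
end


lemma main_comb:
  fixes d r :: nat and c :: "nat \<Rightarrow> 'a" and R :: "nat \<Rightarrow> 'a set" and a :: 'a
  assumes r2: "r \<ge> 2" and injc: "inj_on c {1 .. bmzN d r + 1}"
    and RR: "R \<in> bmz_R d r c"
    and aG: "a \<in> bmz_ground d r c - {bmz_z d r c}"
  shows "\<exists>R'. R' \<in> bmz_R d r c \<and> R' \<noteq> R \<and> (\<forall>i\<in>{1..r}. R i - {a} \<subseteq> R' i) \<and>
           csgn d r c R' = - csgn d r c R \<and>
           (\<forall>R''. R'' \<in> bmz_R d r c \<and> R'' \<noteq> R \<and>
              (\<forall>i\<in>{1..r}. R i - {bmz_z d r c} - {a} \<subseteq> R'' i) \<longrightarrow> R'' = R')"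
proof -
  let ?z = "bmz_z d r c" and ?G = "bmz_ground d r c"
  note gRout = Rout and gRsub = Rsub and gRdisj = Rdisj and gRz = Rz and gRrain = Rrain and gcls_in = cls_in
  note Rout = Rout[OF r2 injc RR] and Rsub = Rsub[OF r2 injc RR] and Rdisj = Rdisj[OF r2 injc RR]
   and Rcov = Rcov[OF r2 injc RR] and Rz = Rz[OF r2 injc RR] and Rrain = Rrain[OF r2 injc RR]
   and cls_in = cls_in[OF r2 injc RR] and g_inj = g_inj[OF r2 injc RR] and g_sub = g_sub[OF r2 injc RR]
   and miss_iff = miss_iff[OF r2 injc RR]
  have r1: "r \<ge> 1" using r2 by simp
  obtain ka ja where ka: "ka \<in> {1..d+1}" and ja: "ja \<in> {1..r-1}" and aeq: "a = c ((ka-1)*(r-1)+ja)"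
    using ground_decomp[OF r2 injc] aG by blast
  have aground: "a \<in> ?G" and anz: "a \<noteq> ?z" using aG by auto
  define g where "g = gk r c R ka"
  obtain m where m: "{1..r} - g ` {1..r-1} = {m}"
    using missing_unique[OF r1 g_inj[OF ka] g_sub[OF ka]] unfolding g_def by blast
  have mP: "Pof r g r = m" using Pof_r[OF r1 g_inj[OF ka] g_sub[OF ka]] m unfolding g_def by blast
  have mr: "m \<in> {1..r}" "m \<notin> g ` {1..r-1}" using m by auto
  have emptym: "R m \<inter> bmz_block d r c ka = {}" using miss_iff[OF ka mr(1)] mr(2) unfolding g_def by blast
  have ablk: "a \<in> bmz_block d r c ka" using c_in_blk[OF r2 injc RR ka ja] aeq by simp
  have kablk: "ka \<in> {1..d+2}" using ka by auto
  have anotm: "a \<notin> R m" using emptym ablk by blast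
  define R' where "R' = (\<lambda>i. if i = m then insert a (R i) else R i - {a})"
  have R'_mem: "\<And>i p. p \<in> R' i \<longleftrightarrow> (p = a \<and> i = m) \<or> (p \<noteq> a \<and> p \<in> R i)"
    unfolding R'_def using anotm by auto
  have RR': "R' \<in> bmz_R d r c"
  proof (rule mk_R[OF r2 injc])
    fix i assume i: "i \<notin> {1..r}"
    thus "R' i = {}" using mr Rout[OF i] unfolding R'_def by auto
  next
    fix i assume i: "i \<in> {1..r}"
    thus "R' i \<subseteq> ?G" using Rsub[OF i] aground unfolding R'_def by auto
  next
    fix i j p assume i: "i \<in> {1..r}" and j: "j \<in> {1..r}" and ij: "i \<noteq> j"
      and p: "p \<in> R' i" and q: "p \<in> R' j"
    show False using R'_mem[of p i] R'_mem[of p j] p q Rdisj[OF i j] ij by auto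
  next
    fix i k p p' assume i: "i \<in> {1..r}" and k: "k \<in> {1..d+2}" and p: "p \<in> R' i"
      and pb: "p \<in> bmz_block d r c k" and p': "p' \<in> R' i" and pb': "p' \<in> bmz_block d r c k"
    have X: "\<And>x. x \<in> R' i \<Longrightarrow> x \<in> bmz_block d r c k \<Longrightarrow> x \<noteq> a \<Longrightarrow> a \<in> R' i \<Longrightarrow> a \<in> bmz_block d r c k \<Longrightarrow> False"
    proof -
      fix x assume x: "x \<in> R' i" "x \<in> bmz_block d r c k" "x \<noteq> a" "a \<in> R' i" "a \<in> bmz_block d r c k"
      have im: "i = m" using x(4) R'_mem[of a i] by auto
      from x(5) have "k = ka" using blk_unique[OF r2 injc ablk _ kablk k] by simp
      thus False using x im R'_mem[of x i] emptym by auto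
    qed
    show "p = p'"
    proof (cases "p = a"; cases "p' = a")
      assume "p = a" "p' = a" thus ?thesis by simp
    next
      assume "p = a" "p' \<noteq> a" thus ?thesis using X[OF p' pb'] p pb by auto
    next
      assume "p \<noteq> a" "p' = a" thus ?thesis using X[OF p pb] p' pb' by auto
    next
      assume "p \<noteq> a" "p' \<noteq> a"
      thus ?thesis using Rrain[OF i k _ pb _ pb'] R'_mem[of p i] R'_mem[of p' i] p p' by auto
    qed
  next
    fix p assume p: "p \<in> ?G"
    show "\<exists>i\<in>{1..r}. p \<in> R' i"
    proof (cases "p = a")
      case True thus ?thesis using mr R'_mem by auto
    next
      case False thus ?thesis using cls_in[OF p] R'_mem by blast
    qed
  next
    show "?z \<in> R' r" using Rz anz R'_mem by auto
  qed
  note cls_eq' = cls_eq[OF r2 injc RR']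
  have cls': "\<And>p. p \<in> ?G \<Longrightarrow> p \<noteq> a \<Longrightarrow> bmz_cls r R' p = bmz_cls r R p"
    using cls_in cls_eq' R'_mem by metis
  have clsa: "bmz_cls r R' a = m" using cls_eq'[OF mr(1)] R'_mem by auto
  have neq: "R' \<noteq> R" using R'_mem[of a m] anotm by auto
  have sup: "\<forall>i\<in>{1..r}. R i - {a} \<subseteq> R' i" using R'_mem by auto
  have pi_other: "\<And>k. k \<in> {1..d+1} \<Longrightarrow> k \<noteq> ka \<Longrightarrow> bmz_pi r c R' k = bmz_pi r c R k"
  proof -
    fix k assume k: "k \<in> {1..d+1}" and kk: "k \<noteq> ka"
    show "bmz_pi r c R' k = bmz_pi r c R k" unfolding pi_eq
    proof (rule Pof_cong)
      fix j assume j: "j \<in> {1..r-1}"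
      have "c ((k-1)*(r-1)+j) \<noteq> a" using c_idx_inj[OF r2 injc k j ka ja] kk aeq by auto
      thus "gk r c R' k j = gk r c R k j"
        using cls'[OF c_in_ground[OF r2 injc RR k j]] by (simp add: gk_def)
    qed
  qed
  have pi_ka: "sign (bmz_pi r c R' ka) = - sign (bmz_pi r c R ka)"
    unfolding pi_eq g_def[symmetric]
  proof (rule Pof_swap[OF r1 g_inj[OF ka, folded g_def] g_sub[OF ka, folded g_def] ja])
    fix j assume j: "j \<in> {1..r-1}" "j \<noteq> ja"
    have "c ((ka-1)*(r-1)+j) \<noteq> a" using c_idx_inj[OF r2 injc ka j(1) ka ja] j aeq by auto
    thus "gk r c R' ka j = g j"
      using cls'[OF c_in_ground[OF r2 injc RR ka j(1)]] by (simp add: gk_def g_def)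
  next
    show "gk r c R' ka ja = Pof r g r" using clsa aeq mP by (simp add: gk_def)
  qed
  have csg: "csgn d r c R' = - csgn d r c R"
  proof -
    have f: "finite {1..d+1}" by simp
    have "csgn d r c R' = sign (bmz_pi r c R' ka) * (\<Prod>k\<in>{1..d+1} - {ka}. sign (bmz_pi r c R' k))"
      unfolding csgn_def by (rule prod.remove[OF f ka])
    also have "(\<Prod>k\<in>{1..d+1} - {ka}. sign (bmz_pi r c R' k)) = (\<Prod>k\<in>{1..d+1} - {ka}. sign (bmz_pi r c R k))"
      by (rule prod.cong) (auto simp: pi_other)
    also have "csgn d r c R = sign (bmz_pi r c R ka) * (\<Prod>k\<in>{1..d+1} - {ka}. sign (bmz_pi r c R k))"
      unfolding csgn_def by (rule prod.remove[OF f ka])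
    ultimately show ?thesis using pi_ka by simp
  qed
  have uniq: "\<And>R''. R'' \<in> bmz_R d r c \<Longrightarrow> R'' \<noteq> R \<Longrightarrow>
              (\<forall>i\<in>{1..r}. R i - {?z} - {a} \<subseteq> R'' i) \<Longrightarrow> R'' = R'"
  proof -
    fix R'' assume RR'': "R'' \<in> bmz_R d r c" and ne: "R'' \<noteq> R"
      and hs: "\<forall>i\<in>{1..r}. R i - {?z} - {a} \<subseteq> R'' i"
    note Rout'' = gRout[OF r2 injc RR''] and Rsub'' = gRsub[OF r2 injc RR''] and Rdisj'' = gRdisj[OF r2 injc RR'']
      and Rz'' = gRz[OF r2 injc RR''] and Rrain'' = gRrain[OF r2 injc RR''] and cls_in'' = gcls_in[OF r2 injc RR'']
    have rr: "r \<in> {1..r}" using r1 by simp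
    have sub'': "\<And>i. i \<in> {1..r} \<Longrightarrow> R i - {a} \<subseteq> R'' i"
    proof
      fix i p assume i: "i \<in> {1..r}" and p: "p \<in> R i - {a}"
      show "p \<in> R'' i"
      proof (cases "p = ?z")
        case True
        hence "i = r" using Rdisj[OF i rr] Rz p by auto
        thus ?thesis using True Rz'' by simp
      next
        case False thus ?thesis using hs i p by auto
      qed
    qed
    have eqa: "\<And>i p. i \<in> {1..r} \<Longrightarrow> p \<noteq> a \<Longrightarrow> p \<in> R'' i \<longleftrightarrow> p \<in> R i"
    proof
      fix i p assume i: "i \<in> {1..r}" and pa: "p \<noteq> a" and p: "p \<in> R'' i"
      have pG: "p \<in> ?G" using Rsub''[OF i] p by auto
      have "p \<in> R'' (bmz_cls r R p)" using sub''[of "bmz_cls r R p"] cls_in[OF pG] pa by auto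
      hence "bmz_cls r R p = i" using Rdisj''[OF _ i _ p] cls_in[OF pG] by blast
      thus "p \<in> R i" using cls_in[OF pG] by simp
    next
      fix i p assume i: "i \<in> {1..r}" and pa: "p \<noteq> a" and p: "p \<in> R i"
      thus "p \<in> R'' i" using sub''[OF i] by auto
    qed
    define i2 where "i2 = bmz_cls r R'' a"
    have i2: "i2 \<in> {1..r}" "a \<in> R'' i2" using cls_in''[OF aground] unfolding i2_def by auto
    have aR''iff: "\<And>i. i \<in> {1..r} \<Longrightarrow> a \<in> R'' i \<longleftrightarrow> i = i2" using Rdisj''[OF _ i2(1) _ i2(2)] i2 by blast
    have ai2: "a \<notin> R i2"
    proof
      assume ai: "a \<in> R i2"
      have "R'' = R"
      proof
        fix i show "R'' i = R i"
        proof (cases "i \<in> {1..r}")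
          case False thus ?thesis using Rout Rout'' by simp
        next
          case True
          have "a \<in> R i \<longleftrightarrow> i = i2" using Rdisj[OF _ i2(1) _ ai] ai True by blast
          note h = this eqa[OF True] aR''iff[OF True]
          show ?thesis
          proof (rule set_eqI)
            fix p show "p \<in> R'' i \<longleftrightarrow> p \<in> R i"
              using h by (cases "p = a") auto
          qed
        qed
      qed
      thus False using ne by simp
    qed
    have "R i2 \<inter> bmz_block d r c ka = {}"
    proof (rule ccontr)
      assume "R i2 \<inter> bmz_block d r c ka \<noteq> {}"
      then obtain p where p: "p \<in> R i2" "p \<in> bmz_block d r c ka" by auto
      have pa: "p \<noteq> a" using p ai2 by auto
      have "p \<in> R'' i2" using eqa[OF i2(1) pa] p by simp
      hence "p = a" using Rrain''[OF i2(1) kablk _ p(2) i2(2) ablk] by simp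
      thus False using pa by simp
    qed
    hence "i2 \<notin> g ` {1..r-1}" using miss_iff[OF ka i2(1)] unfolding g_def by blast
    hence i2m: "i2 = m" using m i2(1) by blast
    show "R'' = R'"
    proof
      fix i show "R'' i = R' i"
      proof (cases "i \<in> {1..r}")
        case False thus ?thesis using Rout'' Rout mr(1) unfolding R'_def by auto
      next
        case True
        show ?thesis
        proof (rule set_eqI)
          fix p show "p \<in> R'' i \<longleftrightarrow> p \<in> R' i"
          proof (cases "p = a")
            case True2: True
            thus ?thesis using aR''iff[OF True] i2m R'_mem by auto
          next
            case False
            thus ?thesis using eqa[OF True False] R'_mem by auto
          qed
        qed
      qed
    qed
  qed
  show ?thesis using RR' neq sup csg uniq by blast
qed


theorem lemma8:
  fixes c :: "nat \<Rightarrow> real^'d" and w :: "nat \<Rightarrow> real^'m"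
    and r :: nat and R :: "nat \<Rightarrow> (real^'d) set" and a :: "real^'d"
  assumes "r \<ge> 2"
    and "CARD('m) = r - 1"
    and "regular_simplex_centered r w"
    and "inj_on c {1 .. bmzN CARD('d) r + 1}"
    and "R \<in> bmz_R CARD('d) r c"
    and "a \<in> bmz_ground CARD('d) r c - {bmz_z CARD('d) r c}"
  shows "\<exists>R'. R' \<in> bmz_R CARD('d) r c \<and> R' \<noteq> R \<and>
           bmz_Phi w r (remove_pt (remove_pt R (bmz_z CARD('d) r c)) a)
             \<subseteq> bmz_Phi w r (remove_pt R' (bmz_z CARD('d) r c)) \<and>
           csgn CARD('d) r c R' = - csgn CARD('d) r c R \<and>
           (\<forall>R''. R'' \<in> bmz_R CARD('d) r c \<and> R'' \<noteq> R \<and>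
              bmz_Phi w r (remove_pt (remove_pt R (bmz_z CARD('d) r c)) a)
                \<subseteq> bmz_Phi w r (remove_pt R'' (bmz_z CARD('d) r c)) \<longrightarrow> R'' = R')"
proof -
  let ?z = "bmz_z CARD('d) r c"
  obtain R' where R': "R' \<in> bmz_R CARD('d) r c" "R' \<noteq> R" "\<forall>i\<in>{1..r}. R i - {a} \<subseteq> R' i"
      "csgn CARD('d) r c R' = - csgn CARD('d) r c R"
      and U: "\<forall>R''. R'' \<in> bmz_R CARD('d) r c \<and> R'' \<noteq> R \<and>
              (\<forall>i\<in>{1..r}. R i - {?z} - {a} \<subseteq> R'' i) \<longrightarrow> R'' = R'"
    using main_comb[OF assms(1) assms(4) assms(5) assms(6)] by blast
  have P: "bmz_Phi w r (remove_pt (remove_pt R ?z) a) \<subseteq> bmz_Phi w r (remove_pt R' ?z)"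
    by (rule Phi_mono) (use R'(3) in \<open>auto simp: remove_pt_def\<close>)
  have Q: "\<forall>R''. R'' \<in> bmz_R CARD('d) r c \<and> R'' \<noteq> R \<and>
              bmz_Phi w r (remove_pt (remove_pt R ?z) a)
                \<subseteq> bmz_Phi w r (remove_pt R'' ?z) \<longrightarrow> R'' = R'"
  proof (intro allI impI)
    fix R'' assume h: "R'' \<in> bmz_R CARD('d) r c \<and> R'' \<noteq> R \<and>
              bmz_Phi w r (remove_pt (remove_pt R ?z) a) \<subseteq> bmz_Phi w r (remove_pt R'' ?z)"
    have "\<forall>i\<in>{1..r}. R i - {?z} - {a} \<subseteq> R'' i"
    proof
      fix i assume i: "i \<in> {1..r}"
      have "remove_pt (remove_pt R ?z) a i \<subseteq> remove_pt R'' ?z i"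
        using Phi_sub_D[OF assms(1) assms(3) _ i] h by blast
      thus "R i - {?z} - {a} \<subseteq> R'' i" by (auto simp: remove_pt_def)
    qed
    thus "R'' = R'" using U h by blast
  qed
  show ?thesis using R'(1,2,4) P Q by blast
qed

end
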